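(* Let $\hat v\in\{0,1\}^{\mathcal T}$ be the indicator vector of a proper triple set. Then the optimal objective value of the linear program $\mathrm{D}(\hat v)$ lies in the interval $[-\eta,0]$, where $\eta=-\sum_{i=1}^m\min(0,\alpha_i)$ and $\mathrm{D}(\hat v)$ is: maximize $-\sum_{t\in\mathcal T}\big[(1-\hat v_t)(\lambda_{t,1}+\lambda_{t,2})+(2-\hat v_t)\lambda_{t,3}\big]-\sum_{J\in\mathcal N}\mu_J$ over $\lambda_{t,1},\lambda_{t,2},\lambda_{t,3}\ge0$ ($t\in\mathcal T$) and $\mu_J\ge 0$ ($J\in\mathcal N$), subject to, for every $J\in\mathcal N$, $\beta_J+\sum_{t:\mathsf{tail1}(t)=J}(-\lambda_{t,1}+\lambda_{t,3})+\sum_{t:\mathsf{tail2}(t)=J}(-\lambda_{t,2}+\lambda_{t,3})+\sum_{t:\mathsf{head}(t)=J}(\lambda_{t,1}+\lambda_{t,2}-\lambda_{t,3})+\mu_J\ge 0.$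
   Context: A multilinear program has data $n,m$, coefficients $\alpha_i\in\mathbb{R}$ and nonempty index sets $J_i\subseteq[n]$. Let $\mathcal N=\bigcup_i\{J:\emptyset\ne J\subseteq J_i\}$ and $\beta_J=\sum_{i:J_i=J}\alpha_i$ for $J\in\mathcal N$. A triple is $t=(J,J',J'')$ with $J''\in\mathcal N$, $|J''|\ge2$, $J,J'$ nonempty, disjoint, $J\cup J'=J''$, listed with $J,J'$ in lexicographic order; $\mathsf{tail1}(t)=J$, $\mathsf{tail2}(t)=J'$, $\mathsf{head}(t)=J''$; $\mathcal T$ is the set of all triples. A proper triple set is a set $T\subseteq\mathcal T$ containing a subset $T'$ such that (1) every $J_i$ with $|J_i|>1$ is the head of some triple in $T'$, and (2) whenever a set $J$ with $|J|>1$ is the first or second element of a triple in $T'$, $J$ is the head of a different triple in $T'$; its indicator vector has $\hat v_t=1$ iff $t\in T$. $\mathrm{D}(\hat v)$ is the LP dual of the McCormick relaxation $\min\sum_J\beta_Jy_J$ over $y\in[0,1]^{\mathcal N}$ subject to $y_{J''}-y_J\le1-\hat v_t$, $y_{J''}-y_{J'}\le1-\hat v_t$, $y_J+y_{J'}-y_{J''}\le2-\hat v_t$ for all $t=(J,J',J'')\in\mathcal T$ (with $\lambda_{t,1},\lambda_{t,2},\lambda_{t,3}$ the multipliers of these three inequalities and $\mu_J$ that of $y_J\le1$). *)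

theory Defs
  imports Complex_Main
begin

type_synonym triple = "nat set \<times> nat set \<times> nat set"

definition tail1 :: "triple \<Rightarrow> nat set" where "tail1 t = fst t"
definition tail2 :: "triple \<Rightarrow> nat set" where "tail2 t = fst (snd t)"
definition head :: "triple \<Rightarrow> nat set" where "head t = snd (snd t)"

definition NN :: "nat \<Rightarrow> (nat \<Rightarrow> nat set) \<Rightarrow> nat set set" where
  "NN m Js = (\<Union>i\<in>{1..m}. {J. J \<noteq> {} \<and> J \<subseteq> Js i})"

definition beta :: "nat \<Rightarrow> (nat \<Rightarrow> real) \<Rightarrow> (nat \<Rightarrow> nat set) \<Rightarrow> nat set \<Rightarrow> real" where
  "beta m alpha Js J = (\<Sum>i\<in>{i\<in>{1..m}. Js i = J}. alpha i)"

definition lex_set_less :: "nat set \<Rightarrow> nat set \<Rightarrow> bool" where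
  "lex_set_less A B = lexordp (<) (sorted_list_of_set A) (sorted_list_of_set B)"

definition triples :: "nat \<Rightarrow> (nat \<Rightarrow> nat set) \<Rightarrow> triple set" where
  "triples m Js = {(A, B, C). C \<in> NN m Js \<and> card C \<ge> 2 \<and> A \<noteq> {} \<and> B \<noteq> {}
      \<and> A \<inter> B = {} \<and> A \<union> B = C \<and> lex_set_less A B}"

definition proper_triple_set :: "nat \<Rightarrow> (nat \<Rightarrow> nat set) \<Rightarrow> triple set \<Rightarrow> bool" where
  "proper_triple_set m Js T \<longleftrightarrow> T \<subseteq> triples m Js \<and>
     (\<exists>T' \<subseteq> T.
        (\<forall>i\<in>{1..m}. card (Js i) > 1 \<longrightarrow> (\<exists>t\<in>T'. head t = Js i)) \<and>
        (\<forall>t\<in>T'. \<forall>K\<in>{tail1 t, tail2 t}. card K > 1 \<longrightarrow>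
            (\<exists>t'\<in>T'. t' \<noteq> t \<and> head t' = K)))"

definition indicator_vec :: "triple set \<Rightarrow> triple \<Rightarrow> real" where
  "indicator_vec T t = (if t \<in> T then 1 else 0)"

definition dual_feasible ::
  "nat \<Rightarrow> (nat \<Rightarrow> real) \<Rightarrow> (nat \<Rightarrow> nat set) \<Rightarrow>
   (triple \<Rightarrow> real) \<Rightarrow> (triple \<Rightarrow> real) \<Rightarrow> (triple \<Rightarrow> real) \<Rightarrow> (nat set \<Rightarrow> real) \<Rightarrow> bool" where
  "dual_feasible m alpha Js l1 l2 l3 mu \<longleftrightarrow>
     (\<forall>t\<in>triples m Js. l1 t \<ge> 0 \<and> l2 t \<ge> 0 \<and> l3 t \<ge> 0) \<and>
     (\<forall>J\<in>NN m Js. mu J \<ge> 0) \<and>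
     (\<forall>J\<in>NN m Js.
        beta m alpha Js J
        + (\<Sum>t\<in>{t\<in>triples m Js. tail1 t = J}. - l1 t + l3 t)
        + (\<Sum>t\<in>{t\<in>triples m Js. tail2 t = J}. - l2 t + l3 t)
        + (\<Sum>t\<in>{t\<in>triples m Js. head t = J}. l1 t + l2 t - l3 t)
        + mu J \<ge> 0)"

definition dual_obj ::
  "nat \<Rightarrow> (nat \<Rightarrow> nat set) \<Rightarrow> (triple \<Rightarrow> real) \<Rightarrow>
   (triple \<Rightarrow> real) \<Rightarrow> (triple \<Rightarrow> real) \<Rightarrow> (triple \<Rightarrow> real) \<Rightarrow> (nat set \<Rightarrow> real) \<Rightarrow> real" where
  "dual_obj m Js v l1 l2 l3 mu =
     - (\<Sum>t\<in>triples m Js. (1 - v t) * (l1 t + l2 t) + (2 - v t) * l3 t)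
     - (\<Sum>J\<in>NN m Js. mu J)"

definition dual_opt_value ::
  "nat \<Rightarrow> (nat \<Rightarrow> real) \<Rightarrow> (nat \<Rightarrow> nat set) \<Rightarrow> (triple \<Rightarrow> real) \<Rightarrow> real \<Rightarrow> bool" where
  "dual_opt_value m alpha Js v val \<longleftrightarrow>
     (\<exists>l1 l2 l3 mu. dual_feasible m alpha Js l1 l2 l3 mu \<and> dual_obj m Js v l1 l2 l3 mu = val) \<and>
     (\<forall>l1 l2 l3 mu. dual_feasible m alpha Js l1 l2 l3 mu \<longrightarrow> dual_obj m Js v l1 l2 l3 mu \<le> val)"

end

theory Submission
  imports Defs "HOL-Analysis.Analysis"
begin

lemma NN_sub:
  assumes "\<forall>i\<in>{1..m}. Js i \<noteq> {} \<and> Js i \<subseteq> {1..n}"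
  shows "NN m Js \<subseteq> Pow {1..n}"
  using assms by (auto simp: NN_def)

lemma finite_NN:
  assumes "\<forall>i\<in>{1..m}. Js i \<noteq> {} \<and> Js i \<subseteq> {1..n}"
  shows "finite (NN m Js)"
  using NN_sub[OF assms] by (meson finite_Pow_iff finite_atLeastAtMost finite_subset)

lemma NN_down: "J \<in> NN m Js \<Longrightarrow> K \<noteq> {} \<Longrightarrow> K \<subseteq> J \<Longrightarrow> K \<in> NN m Js"
  unfolding NN_def by (auto dest: subset_trans)

lemma card_NN:
  assumes "\<forall>i\<in>{1..m}. Js i \<noteq> {} \<and> Js i \<subseteq> {1..n}" and "J \<in> NN m Js"
  shows "card J \<le> n"
proof -
  have "J \<subseteq> {1..n}" using NN_sub[OF assms(1)] assms(2) by auto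
  then have "card J \<le> card {1..n}" by (intro card_mono) auto
  then show ?thesis by simp
qed

lemma tr_props:
  assumes hJ: "\<forall>i\<in>{1..m}. Js i \<noteq> {} \<and> Js i \<subseteq> {1..n}" and t: "t \<in> triples m Js"
  shows "tail1 t \<in> NN m Js" "tail2 t \<in> NN m Js" "head t \<in> NN m Js"
    "card (tail1 t) < card (head t)" "card (tail2 t) < card (head t)"
proof -
  obtain A B C where tt: "t = (A, B, C)" by (cases t) auto
  have C: "C \<in> NN m Js" "A \<noteq> {}" "B \<noteq> {}" "A \<inter> B = {}" "A \<union> B = C"
    using t by (auto simp: triples_def tt)
  have fC: "finite C" using C(1) NN_sub[OF hJ] by (meson PowD finite_atLeastAtMost finite_subset subsetD)
  show "tail1 t \<in> NN m Js" "tail2 t \<in> NN m Js" "head t \<in> NN m Js"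
    using C NN_down[OF C(1)] by (auto simp: tail1_def tail2_def head_def tt)
  have "A \<subset> C" using C by blast
  then show "card (tail1 t) < card (head t)" using fC
    by (simp add: tail1_def head_def tt psubset_card_mono)
  have "B \<subset> C" using C by blast
  then show "card (tail2 t) < card (head t)" using fC
    by (simp add: tail2_def head_def tt psubset_card_mono)
qed

lemma finite_triples:
  assumes hJ: "\<forall>i\<in>{1..m}. Js i \<noteq> {} \<and> Js i \<subseteq> {1..n}"
  shows "finite (triples m Js)"
proof -
  have "triples m Js \<subseteq> NN m Js \<times> NN m Js \<times> NN m Js"
  proof
    fix t assume "t \<in> triples m Js"
    from tr_props[OF hJ this] show "t \<in> NN m Js \<times> NN m Js \<times> NN m Js"
      by (cases t) (auto simp: tail1_def tail2_def head_def)
  qed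
  then show ?thesis using finite_NN[OF hJ] by (meson finite_SigmaI finite_subset)
qed

lemma sum_group_w:
  fixes w :: "'b \<Rightarrow> real" and f :: "'a \<Rightarrow> real"
  assumes "finite A" "finite B" "g ` A \<subseteq> B"
  shows "(\<Sum>J\<in>B. w J * (\<Sum>t\<in>{t\<in>A. g t = J}. f t)) = (\<Sum>t\<in>A. w (g t) * f t)"
proof -
  have "(\<Sum>J\<in>B. w J * (\<Sum>t\<in>{t\<in>A. g t = J}. f t)) = (\<Sum>J\<in>B. (\<Sum>t\<in>{t\<in>A. g t = J}. w (g t) * f t))"
  proof (intro sum.cong refl)
    fix J
    show "w J * (\<Sum>t\<in>{t\<in>A. g t = J}. f t) = (\<Sum>t\<in>{t\<in>A. g t = J}. w (g t) * f t)"
      unfolding sum_distrib_left by (rule sum.cong) auto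
  qed
  also have "\<dots> = (\<Sum>t\<in>A. w (g t) * f t)" using sum.group[OF assms, of "\<lambda>t. w (g t) * f t"] by simp
  finally show ?thesis .
qed

lemma eta_bound:
  assumes hJ: "\<forall>i\<in>{1..m}. Js i \<noteq> {} \<and> Js i \<subseteq> {1..n}"
  shows "(\<Sum>J\<in>NN m Js. max 0 (- beta m alpha Js J)) \<le> - (\<Sum>i=1..m. min 0 (alpha i))"
proof -
  have "(\<Sum>J\<in>NN m Js. max 0 (- beta m alpha Js J)) \<le> (\<Sum>J\<in>NN m Js. (\<Sum>i\<in>{i\<in>{1..m}. Js i = J}. max 0 (- alpha i)))"
  proof (intro sum_mono)
    fix J
    have "- beta m alpha Js J = (\<Sum>i\<in>{i\<in>{1..m}. Js i = J}. - alpha i)"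
      by (simp add: beta_def sum_negf)
    also have "\<dots> \<le> (\<Sum>i\<in>{i\<in>{1..m}. Js i = J}. max 0 (- alpha i))" by (intro sum_mono) auto
    finally show "max 0 (- beta m alpha Js J) \<le> (\<Sum>i\<in>{i\<in>{1..m}. Js i = J}. max 0 (- alpha i))"
      by (simp add: sum_nonneg)
  qed
  also have "\<dots> = (\<Sum>i\<in>{1..m}. max 0 (- alpha i))"
  proof (rule sum.group)
    show "Js ` {1..m} \<subseteq> NN m Js" using hJ by (auto simp: NN_def)
  qed (auto simp: finite_NN[OF hJ])
  also have "\<dots> = - (\<Sum>i=1..m. min 0 (alpha i))"
    by (simp add: sum_negf[symmetric]) (intro sum.cong; auto)
  finally show ?thesis .
qed

definition Mbound :: "nat \<Rightarrow> nat \<Rightarrow> (nat \<Rightarrow> real) \<Rightarrow> (nat \<Rightarrow> nat set) \<Rightarrow> real \<Rightarrow> real" where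
  "Mbound n m alpha Js val0 = 2^n * ((\<Sum>J\<in>NN m Js. \<bar>beta m alpha Js J\<bar>) + 3 * (- val0)) - val0"

lemma bound:
  fixes a b c :: "triple \<Rightarrow> real" and d :: "nat set \<Rightarrow> real"
  assumes hJ: "\<forall>i\<in>{1..m}. Js i \<noteq> {} \<and> Js i \<subseteq> {1..n}"
    and feas: "dual_feasible m alpha Js a b c d"
    and v01: "\<And>t. v t = 0 \<or> v t = 1"
    and obj: "val0 \<le> dual_obj m Js v a b c d"
  shows "\<forall>t\<in>triples m Js. a t \<le> Mbound n m alpha Js val0 \<and> b t \<le> Mbound n m alpha Js val0
            \<and> c t \<le> Mbound n m alpha Js val0"
    "\<forall>J\<in>NN m Js. d J \<le> Mbound n m alpha Js val0"
proof -
  define TT where "TT = triples m Js"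
  define N where "N = NN m Js"
  define Bs where "Bs = (\<Sum>J\<in>N. \<bar>beta m alpha Js J\<bar>)"
  define C where "C = - val0"
  have Mb: "Mbound n m alpha Js val0 = 2^n * (Bs + 3 * C) + C"
    by (simp add: Mbound_def Bs_def N_def C_def)
  have fT: "finite TT" using finite_triples[OF hJ] by (simp add: TT_def)
  have fN: "finite N" using finite_NN[OF hJ] by (simp add: N_def)
  have nn: "\<forall>t\<in>TT. 0 \<le> a t \<and> 0 \<le> b t \<and> 0 \<le> c t" "\<forall>J\<in>N. 0 \<le> d J"
    using feas by (auto simp: dual_feasible_def TT_def N_def)
  define X where "X J = beta m alpha Js J
        + (\<Sum>t\<in>{t\<in>TT. tail1 t = J}. - a t + c t)
        + (\<Sum>t\<in>{t\<in>TT. tail2 t = J}. - b t + c t)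
        + (\<Sum>t\<in>{t\<in>TT. head t = J}. a t + b t - c t)
        + d J" for J
  have cons: "\<forall>J\<in>N. 0 \<le> X J"
    using feas by (simp add: dual_feasible_def TT_def N_def X_def)
  define s where "s t = (1 - v t) * (a t + b t) + (2 - v t) * c t" for t
  have s_ge: "0 \<le> s t \<and> c t \<le> s t" if "t \<in> TT" for t
    using v01[of t] nn(1) that by (auto simp: s_def)
  have objeq: "dual_obj m Js v a b c d = - (\<Sum>t\<in>TT. s t) - (\<Sum>J\<in>N. d J)"
    by (simp add: dual_obj_def s_def TT_def N_def)
  have Ss: "0 \<le> (\<Sum>t\<in>TT. s t)" using s_ge by (simp add: sum_nonneg)
  have Sd0: "0 \<le> (\<Sum>J\<in>N. d J)" using nn(2) by (simp add: sum_nonneg)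
  have Sc0: "0 \<le> (\<Sum>t\<in>TT. c t)" using nn(1) by (simp add: sum_nonneg)
  have Sall: "(\<Sum>t\<in>TT. s t) + (\<Sum>J\<in>N. d J) \<le> C" using obj objeq by (simp add: C_def)
  have "(\<Sum>t\<in>TT. c t) \<le> (\<Sum>t\<in>TT. s t)" using s_ge by (intro sum_mono) auto
  then have Sc: "(\<Sum>t\<in>TT. c t) \<le> C" using Sall Sd0 by linarith
  have Sd: "(\<Sum>J\<in>N. d J) \<le> C" using Sall Ss by linarith
  have C0: "0 \<le> C" using Sd Sd0 by linarith
  have Bs0: "0 \<le> Bs" by (simp add: Bs_def sum_nonneg)
  define w where "w J = (2::real)^(n - card J)" for J :: "nat set"
  have w_le: "w J \<le> 2^n" for J unfolding w_def by (rule power_increasing) auto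
  have w_ge: "1 \<le> w J" for J unfolding w_def by simp
  have wdiff: "w (head t) + 1 \<le> w (tail1 t) \<and> w (head t) + 1 \<le> w (tail2 t)" if "t \<in> TT" for t
  proof -
    have t: "t \<in> triples m Js" using that by (simp add: TT_def)
    have ch: "card (head t) \<le> n" using card_NN[OF hJ tr_props(3)[OF hJ t]] .
    have "w (head t) + 1 \<le> w K" if "card K < card (head t)" for K
    proof -
      have "Suc (n - card (head t)) \<le> n - card K" using that ch by linarith
      then have "(2::real) ^ Suc (n - card (head t)) \<le> 2 ^ (n - card K)"
        by (rule power_increasing) auto
      then have "2 * w (head t) \<le> w K" by (simp add: w_def)
      then show ?thesis using w_ge[of "head t"] by linarith
    qed
    then show ?thesis using tr_props(4,5)[OF hJ t] by blast
  qed
  have img1: "tail1 ` TT \<subseteq> N" and img2: "tail2 ` TT \<subseteq> N" and img3: "head ` TT \<subseteq> N"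
    using tr_props[OF hJ] by (auto simp: TT_def N_def)
  have "0 \<le> (\<Sum>J\<in>N. w J * X J)"
    using cons w_ge by (intro sum_nonneg) (auto intro: mult_nonneg_nonneg order_trans[OF zero_le_one])
  also have "(\<Sum>J\<in>N. w J * X J) = (\<Sum>J\<in>N. w J * beta m alpha Js J)
        + (\<Sum>J\<in>N. w J * (\<Sum>t\<in>{t\<in>TT. tail1 t = J}. - a t + c t))
        + (\<Sum>J\<in>N. w J * (\<Sum>t\<in>{t\<in>TT. tail2 t = J}. - b t + c t))
        + (\<Sum>J\<in>N. w J * (\<Sum>t\<in>{t\<in>TT. head t = J}. a t + b t - c t))
        + (\<Sum>J\<in>N. w J * d J)"
    by (simp add: X_def distrib_left sum.distrib)
  also have "\<dots> = (\<Sum>J\<in>N. w J * beta m alpha Js J)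
        + (\<Sum>t\<in>TT. w (tail1 t) * (- a t + c t))
        + (\<Sum>t\<in>TT. w (tail2 t) * (- b t + c t))
        + (\<Sum>t\<in>TT. w (head t) * (a t + b t - c t))
        + (\<Sum>J\<in>N. w J * d J)"
    using sum_group_w[OF fT fN img1] sum_group_w[OF fT fN img2] sum_group_w[OF fT fN img3] by simp
  finally have main: "0 \<le> (\<Sum>J\<in>N. w J * beta m alpha Js J)
        + (\<Sum>t\<in>TT. w (tail1 t) * (- a t + c t))
        + (\<Sum>t\<in>TT. w (tail2 t) * (- b t + c t))
        + (\<Sum>t\<in>TT. w (head t) * (a t + b t - c t))
        + (\<Sum>J\<in>N. w J * d J)" .
  have "(\<Sum>t\<in>TT. (w (tail1 t) - w (head t)) * a t + (w (tail2 t) - w (head t)) * b t)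
      = (\<Sum>t\<in>TT. (w (tail1 t) + w (tail2 t) - w (head t)) * c t - w (tail1 t) * (- a t + c t)
           - w (tail2 t) * (- b t + c t) - w (head t) * (a t + b t - c t))"
    by (rule sum.cong) (simp_all add: algebra_simps)
  also have "\<dots> = (\<Sum>t\<in>TT. (w (tail1 t) + w (tail2 t) - w (head t)) * c t)
        - (\<Sum>t\<in>TT. w (tail1 t) * (- a t + c t))
        - (\<Sum>t\<in>TT. w (tail2 t) * (- b t + c t))
        - (\<Sum>t\<in>TT. w (head t) * (a t + b t - c t))"
    by (simp add: sum_subtractf)
  finally have eq: "(\<Sum>t\<in>TT. (w (tail1 t) - w (head t)) * a t + (w (tail2 t) - w (head t)) * b t)
      = (\<Sum>t\<in>TT. (w (tail1 t) + w (tail2 t) - w (head t)) * c t)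
        - (\<Sum>t\<in>TT. w (tail1 t) * (- a t + c t))
        - (\<Sum>t\<in>TT. w (tail2 t) * (- b t + c t))
        - (\<Sum>t\<in>TT. w (head t) * (a t + b t - c t))" .
  have B1: "(\<Sum>J\<in>N. w J * beta m alpha Js J) \<le> 2^n * Bs"
  proof -
    have "(\<Sum>J\<in>N. w J * beta m alpha Js J) \<le> (\<Sum>J\<in>N. 2^n * \<bar>beta m alpha Js J\<bar>)"
    proof (intro sum_mono)
      fix J
      have "w J * beta m alpha Js J \<le> w J * \<bar>beta m alpha Js J\<bar>"
        using w_ge[of J] by (intro mult_left_mono) auto
      also have "\<dots> \<le> 2^n * \<bar>beta m alpha Js J\<bar>" using w_le[of J] by (intro mult_right_mono) auto
      finally show "w J * beta m alpha Js J \<le> 2^n * \<bar>beta m alpha Js J\<bar>" .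
    qed
    then show ?thesis by (simp add: Bs_def sum_distrib_left)
  qed
  have B2: "(\<Sum>J\<in>N. w J * d J) \<le> 2^n * C"
  proof -
    have "(\<Sum>J\<in>N. w J * d J) \<le> (\<Sum>J\<in>N. 2^n * d J)"
      using w_le nn(2) by (intro sum_mono mult_right_mono) auto
    also have "\<dots> = 2^n * (\<Sum>J\<in>N. d J)" by (simp add: sum_distrib_left)
    also have "\<dots> \<le> 2^n * C" using Sd by (intro mult_left_mono) auto
    finally show ?thesis .
  qed
  have B3: "(\<Sum>t\<in>TT. (w (tail1 t) + w (tail2 t) - w (head t)) * c t) \<le> 2 * 2^n * C"
  proof -
    have "(\<Sum>t\<in>TT. (w (tail1 t) + w (tail2 t) - w (head t)) * c t) \<le> (\<Sum>t\<in>TT. (2 * 2^n) * c t)"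
    proof (intro sum_mono mult_right_mono)
      fix t
      show "w (tail1 t) + w (tail2 t) - w (head t) \<le> 2 * 2 ^ n"
        using w_le[of "tail1 t"] w_le[of "tail2 t"] w_ge[of "head t"] by linarith
      assume "t \<in> TT" then show "0 \<le> c t" using nn(1) by auto
    qed
    also have "\<dots> = 2 * 2^n * (\<Sum>t\<in>TT. c t)" by (simp add: sum_distrib_left)
    also have "\<dots> \<le> 2 * 2^n * C" using Sc by (intro mult_left_mono) auto
    finally show ?thesis .
  qed
  have B4: "(\<Sum>t\<in>TT. a t + b t) \<le> (\<Sum>t\<in>TT. (w (tail1 t) - w (head t)) * a t + (w (tail2 t) - w (head t)) * b t)"
  proof (intro sum_mono add_mono)
    fix t assume t: "t \<in> TT"
    have "1 * a t \<le> (w (tail1 t) - w (head t)) * a t"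
      using wdiff[OF t] nn(1) t by (intro mult_right_mono) auto
    then show "a t \<le> (w (tail1 t) - w (head t)) * a t" by simp
    have "1 * b t \<le> (w (tail2 t) - w (head t)) * b t"
      using wdiff[OF t] nn(1) t by (intro mult_right_mono) auto
    then show "b t \<le> (w (tail2 t) - w (head t)) * b t" by simp
  qed
  have Sab: "(\<Sum>t\<in>TT. a t + b t) \<le> 2^n * (Bs + 3 * C)"
    using B1 B2 B3 B4 eq main by (simp add: algebra_simps)
  have pw: "0 \<le> (2::real)^n * (Bs + 3 * C)" using Bs0 C0 by simp
  show "\<forall>t\<in>triples m Js. a t \<le> Mbound n m alpha Js val0 \<and> b t \<le> Mbound n m alpha Js val0
            \<and> c t \<le> Mbound n m alpha Js val0"
  proof
    fix t assume "t \<in> triples m Js"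
    then have t: "t \<in> TT" by (simp add: TT_def)
    have "a t + b t \<le> (\<Sum>t\<in>TT. a t + b t)"
      using nn(1) t fT by (intro member_le_sum) auto
    moreover have "c t \<le> (\<Sum>t\<in>TT. c t)"
      using nn(1) t fT by (intro member_le_sum) auto
    ultimately show "a t \<le> Mbound n m alpha Js val0 \<and> b t \<le> Mbound n m alpha Js val0
            \<and> c t \<le> Mbound n m alpha Js val0"
      using Sab Sc pw Mb nn(1) t C0 by auto
  qed
  show "\<forall>J\<in>NN m Js. d J \<le> Mbound n m alpha Js val0"
  proof
    fix J assume "J \<in> NN m Js"
    then have J: "J \<in> N" by (simp add: N_def)
    have "d J \<le> (\<Sum>J\<in>N. d J)"
      using nn(2) J fN by (intro member_le_sum) auto
    then show "d J \<le> Mbound n m alpha Js val0" using Sd pw Mb by linarith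
  qed
qed

lemma compact_PiE_UNIV:
  fixes S :: "'a \<Rightarrow> real set"
  assumes "\<And>i. compact (S i)"
  shows "compact (PiE UNIV S)"
proof -
  have "compactin (product_topology (\<lambda>i. euclidean) UNIV) (PiE UNIV S)"
    using assms by (simp add: compactin_PiE)
  then show ?thesis by (simp add: euclidean_product_topology)
qed
lemma cont_c1 [continuous_intros]: "continuous_on S (\<lambda>x::('a\<Rightarrow>real)\<times>'b::topological_space. fst x t)"
  by (rule continuous_on_product_then_coordinatewise[of S fst]) (rule continuous_on_fst[OF continuous_on_id])
lemma cont_c2 [continuous_intros]: "continuous_on S (\<lambda>x::'b::topological_space\<times>('a\<Rightarrow>real)\<times>'c::topological_space. fst (snd x) t)"
  by (rule continuous_on_product_then_coordinatewise[of S "\<lambda>x. fst (snd x)"]) (rule continuous_on_fst[OF continuous_on_snd[OF continuous_on_id]])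
lemma cont_c3 [continuous_intros]: "continuous_on S (\<lambda>x::'b::topological_space\<times>'d::topological_space\<times>('a\<Rightarrow>real)\<times>'c::topological_space. fst (snd (snd x)) t)"
  by (rule continuous_on_product_then_coordinatewise[of S "\<lambda>x. fst (snd (snd x))"]) (rule continuous_on_fst[OF continuous_on_snd[OF continuous_on_snd[OF continuous_on_id]]])
lemma cont_c4 [continuous_intros]: "continuous_on S (\<lambda>x::'b::topological_space\<times>'d::topological_space\<times>'c::topological_space\<times>('a\<Rightarrow>real). snd (snd (snd x)) t)"
  by (rule continuous_on_product_then_coordinatewise[of S "\<lambda>x. snd (snd (snd x))"]) (rule continuous_on_snd[OF continuous_on_snd[OF continuous_on_snd[OF continuous_on_id]]])

lemma closed_ball_Collect: "(\<And>t. t \<in> A \<Longrightarrow> closed {x. P t x}) \<Longrightarrow> closed {x. \<forall>t\<in>A. P t x}"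
proof -
  assume "\<And>t. t \<in> A \<Longrightarrow> closed {x. P t x}"
  moreover have "{x. \<forall>t\<in>A. P t x} = (\<Inter>t\<in>A. {x. P t x})" by auto
  ultimately show ?thesis by (metis closed_INT)
qed

lemma feas_cong:
  assumes "\<And>t. t \<in> triples m Js \<Longrightarrow> a t = a' t \<and> b t = b' t \<and> c t = c' t"
    and "\<And>J. J \<in> NN m Js \<Longrightarrow> d J = d' J"
  shows "dual_feasible m alpha Js a b c d = dual_feasible m alpha Js a' b' c' d'"
proof -
  have e1: "(\<Sum>t\<in>{t\<in>triples m Js. P t}. f (a t) (b t) (c t)) = (\<Sum>t\<in>{t\<in>triples m Js. P t}. f (a' t) (b' t) (c' t))"
    for P and f :: "real \<Rightarrow> real \<Rightarrow> real \<Rightarrow> real"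
    using assms(1) by (intro sum.cong) auto
  show ?thesis unfolding dual_feasible_def
    using e1[where f="\<lambda>x y z. - x + z"] e1[where f="\<lambda>x y z. - y + z"] e1[where f="\<lambda>x y z. x + y - z"] assms
    by auto
qed

lemma obj_cong:
  assumes "\<And>t. t \<in> triples m Js \<Longrightarrow> a t = a' t \<and> b t = b' t \<and> c t = c' t"
    and "\<And>J. J \<in> NN m Js \<Longrightarrow> d J = d' J"
  shows "dual_obj m Js v a b c d = dual_obj m Js v a' b' c' d'"
  unfolding dual_obj_def using assms by (simp cong: sum.cong)

lemma obj_nonpos:
  assumes "dual_feasible m alpha Js a b c d" and "\<And>t. v t = 0 \<or> v t = 1"
  shows "dual_obj m Js v a b c d \<le> 0"
proof -
  have "0 \<le> (\<Sum>t\<in>triples m Js. (1 - v t) * (a t + b t) + (2 - v t) * c t)"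
  proof (intro sum_nonneg)
    fix t assume "t \<in> triples m Js"
    then show "0 \<le> (1 - v t) * (a t + b t) + (2 - v t) * c t"
      using assms(1) assms(2)[of t] by (auto simp: dual_feasible_def)
  qed
  moreover have "0 \<le> (\<Sum>J\<in>NN m Js. d J)"
    using assms(1) by (intro sum_nonneg) (auto simp: dual_feasible_def)
  ultimately show ?thesis by (simp add: dual_obj_def)
qed

theorem lemma2:
  fixes n m :: nat and alpha :: "nat \<Rightarrow> real" and Js :: "nat \<Rightarrow> nat set" and T :: "triple set"
  assumes "\<forall>i\<in>{1..m}. Js i \<noteq> {} \<and> Js i \<subseteq> {1..n}"
    and "proper_triple_set m Js T"
  defines "eta \<equiv> - (\<Sum>i=1..m. min 0 (alpha i))"
  shows "\<exists>val. dual_opt_value m alpha Js (indicator_vec T) val \<and>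
           - eta \<le> val \<and> val \<le> 0"
proof -
  note hJ = assms(1)
  define v where "v = indicator_vec T"
  have v01: "\<And>t. v t = 0 \<or> v t = 1" by (simp add: v_def indicator_vec_def)
  define TT where "TT = triples m Js"
  define N where "N = NN m Js"
  define F where "F x = dual_feasible m alpha Js (fst x) (fst (snd x)) (fst (snd (snd x))) (snd (snd (snd x)))"
    for x :: "(triple \<Rightarrow> real) \<times> (triple \<Rightarrow> real) \<times> (triple \<Rightarrow> real) \<times> (nat set \<Rightarrow> real)"
  define Ob where "Ob x = dual_obj m Js v (fst x) (fst (snd x)) (fst (snd (snd x))) (snd (snd (snd x)))"
    for x :: "(triple \<Rightarrow> real) \<times> (triple \<Rightarrow> real) \<times> (triple \<Rightarrow> real) \<times> (nat set \<Rightarrow> real)"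
  define x0 :: "(triple \<Rightarrow> real) \<times> (triple \<Rightarrow> real) \<times> (triple \<Rightarrow> real) \<times> (nat set \<Rightarrow> real)"
    where "x0 = (\<lambda>_. 0, \<lambda>_. 0, \<lambda>_. 0, \<lambda>J. if J \<in> N then max 0 (- beta m alpha Js J) else 0)"
  have Fx0: "F x0" by (auto simp: F_def x0_def dual_feasible_def N_def max_def)
  define val0 where "val0 = Ob x0"
  have val0_eq: "val0 = - (\<Sum>J\<in>N. max 0 (- beta m alpha Js J))"
    by (simp add: val0_def Ob_def x0_def dual_obj_def N_def)
  have val0_ge: "- eta \<le> val0"
    using eta_bound[OF hJ, of alpha] by (simp add: val0_eq eta_def N_def)
  define M where "M = Mbound n m alpha Js val0"
  define Box where "Box = PiE UNIV (\<lambda>t. if t \<in> TT then {0..M} else {0})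
     \<times> PiE UNIV (\<lambda>t. if t \<in> TT then {0..M} else {0})
     \<times> PiE UNIV (\<lambda>t. if t \<in> TT then {0..M} else {0})
     \<times> PiE UNIV (\<lambda>J. if J \<in> N then {0..M} else {0})"
  have inBox: "x \<in> Box" if Fx: "F x" and Ox: "val0 \<le> Ob x"
    and z1: "\<forall>t. t \<notin> TT \<longrightarrow> fst x t = 0 \<and> fst (snd x) t = 0 \<and> fst (snd (snd x)) t = 0"
    and z2: "\<forall>J. J \<notin> N \<longrightarrow> snd (snd (snd x)) J = 0" for x
  proof -
    have bd: "\<forall>t\<in>TT. fst x t \<le> M \<and> fst (snd x) t \<le> M \<and> fst (snd (snd x)) t \<le> M"
       "\<forall>J\<in>N. snd (snd (snd x)) J \<le> M"
      using bound[OF hJ Fx[unfolded F_def] v01 Ox[unfolded Ob_def]] by (simp_all add: M_def TT_def N_def)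
    have nn: "\<forall>t\<in>TT. 0 \<le> fst x t \<and> 0 \<le> fst (snd x) t \<and> 0 \<le> fst (snd (snd x)) t"
       "\<forall>J\<in>N. 0 \<le> snd (snd (snd x)) J"
      using Fx by (auto simp: F_def dual_feasible_def TT_def N_def)
    show ?thesis unfolding Box_def using bd nn z1 z2
      by (cases x) (auto simp: PiE_iff)
  qed
  define K where "K = Box \<inter> {x. F x} \<inter> {x. val0 \<le> Ob x}"
  have x0K: "x0 \<in> K"
    unfolding K_def using Fx0 inBox[OF Fx0] by (auto simp: val0_def x0_def)
  have cB: "compact Box" unfolding Box_def
    by (intro compact_Times compact_PiE_UNIV) auto
  have cF: "closed {x. F x}" unfolding F_def dual_feasible_def
    by (intro closed_Collect_conj closed_ball_Collect closed_Collect_le continuous_intros)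
  have cO: "closed {x. val0 \<le> Ob x}" unfolding Ob_def dual_obj_def
    by (intro closed_Collect_le continuous_intros)
  have cK: "compact K" unfolding K_def using cB cF cO
    by (metis Int_assoc closed_Int compact_Int_closed)
  have contO: "continuous_on K Ob" unfolding Ob_def dual_obj_def
    by (intro continuous_intros)
  obtain xs where xs: "xs \<in> K" and xsmax: "\<forall>y\<in>K. Ob y \<le> Ob xs"
    using continuous_attains_sup[OF cK _ contO] x0K by blast
  have Fxs: "F xs" using xs by (simp add: K_def)
  have opt: "dual_obj m Js v l1 l2 l3 mu \<le> Ob xs" if fe: "dual_feasible m alpha Js l1 l2 l3 mu" for l1 l2 l3 mu
  proof -
    define y where "y = ((\<lambda>t. if t \<in> TT then l1 t else 0), (\<lambda>t. if t \<in> TT then l2 t else 0),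
        (\<lambda>t. if t \<in> TT then l3 t else 0), (\<lambda>J. if J \<in> N then mu J else 0))"
    have Fy: "F y" unfolding F_def y_def using fe
      by (subst feas_cong[where a'=l1 and b'=l2 and c'=l3 and d'=mu]) (auto simp: TT_def N_def)
    have Oy: "Ob y = dual_obj m Js v l1 l2 l3 mu" unfolding Ob_def y_def
      by (rule obj_cong) (auto simp: TT_def N_def)
    show ?thesis
    proof (cases "val0 \<le> Ob y")
      case True
      then have "y \<in> Box" using inBox[OF Fy] by (simp add: y_def)
      then have "y \<in> K" using Fy True by (simp add: K_def)
      then show ?thesis using xsmax Oy by auto
    next
      case False
      then show ?thesis using xsmax x0K Oy by (auto simp: val0_def)
    qed
  qed
  show ?thesis
  proof (intro exI conjI)
    show "dual_opt_value m alpha Js (indicator_vec T) (Ob xs)"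
      unfolding dual_opt_value_def
    proof (intro conjI allI impI)
      show "\<exists>l1 l2 l3 mu. dual_feasible m alpha Js l1 l2 l3 mu \<and> dual_obj m Js (indicator_vec T) l1 l2 l3 mu = Ob xs"
        using Fxs by (auto simp: F_def Ob_def v_def)
      show "dual_obj m Js (indicator_vec T) l1 l2 l3 mu \<le> Ob xs"
        if "dual_feasible m alpha Js l1 l2 l3 mu" for l1 l2 l3 mu
        using opt[OF that] by (simp add: v_def)
    qed
    show "- eta \<le> Ob xs" using val0_ge xsmax x0K by (auto simp: val0_def)
    show "Ob xs \<le> 0" using obj_nonpos[OF Fxs[unfolded F_def] v01] by (simp add: Ob_def)
  qed
qed

end
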